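(* For all integers $1\le k\le n$, $\hat E_{k,n}(q)$ is a polynomial in $q$ of degree $(k-1)(n-k)$, and $\hat E_{k,n}(0)$ equals the Narayana number $N_{k,n}=\frac1n\binom{n}{k}\binom{n}{k-1}$.
   Context: Place $1,\dots,n$ clockwise on a circle. Distinct $p_1,\dots,p_m$ are in clockwise cyclic order if $(p_2-p_1)\bmod n<\dots<(p_m-p_1)\bmod n$ (residues in $\{0,\dots,n-1\}$). For $\pi\in S_n$ (fixed points regarded as "counterclockwise loops"), an ordered pair $(i,j)$, $i\ne j$, is aligned if $\pi(j)\ne j$, the entries of $(i,\pi(i),\pi(j),j)$ are pairwise distinct except that possibly $i=\pi(i)$, and the distinct entries in this order are in clockwise cyclic order. An alignment is an unordered pair $\{i,j\}$ with $(i,j)$ or $(j,i)$ aligned; $\mathrm{al}(\pi)$ is their number. A weak excedence of $\pi$ is an $i$ with $\pi(i)\ge i$. $E_{k,n}(q)=\sum q^{k(n-k)-\mathrm{al}(\pi)}$ over $\pi\in S_n$ with exactly $k$ weak excedences, and $\hat E_{k,n}(q)=q^{k-n}E_{k,n}(q)$. *)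

theory Defs
  imports "HOL-Combinatorics.Permutations" "HOL-Computational_Algebra.Polynomial_FPS"
          "HOL-Computational_Algebra.Formal_Laurent_Series"
begin

text \<open>Points 1..n on a circle. A list of distinct points is in clockwise cyclic order
  if the residues (p_l - p_1) mod n, for l = 2..m, are strictly increasing.\<close>
definition cyc_order :: "nat \<Rightarrow> nat list \<Rightarrow> bool" where
  "cyc_order n ps \<longleftrightarrow> distinct ps \<and>
     sorted_wrt (<) (map (\<lambda>p. (int p - int (hd ps)) mod int n) (tl ps))"

definition aligned :: "nat \<Rightarrow> (nat \<Rightarrow> nat) \<Rightarrow> nat \<Rightarrow> nat \<Rightarrow> bool" where
  "aligned n \<pi> i j \<longleftrightarrow> i \<noteq> j \<and> \<pi> j \<noteq> j \<and>
     i \<noteq> \<pi> j \<and> \<pi> i \<noteq> \<pi> j \<and> \<pi> i \<noteq> j \<and>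
     cyc_order n (if i = \<pi> i then [i, \<pi> j, j] else [i, \<pi> i, \<pi> j, j])"

definition alignments :: "nat \<Rightarrow> (nat \<Rightarrow> nat) \<Rightarrow> nat set set" where
  "alignments n \<pi> = {{i, j} | i j. i \<in> {1..n} \<and> j \<in> {1..n} \<and> aligned n \<pi> i j}"

definition al :: "nat \<Rightarrow> (nat \<Rightarrow> nat) \<Rightarrow> nat" where
  "al n \<pi> = card (alignments n \<pi>)"

definition wex :: "nat \<Rightarrow> (nat \<Rightarrow> nat) \<Rightarrow> nat" where
  "wex n \<pi> = card {i \<in> {1..n}. \<pi> i \<ge> i}"

text \<open>E_{k,n}(q) as a Laurent polynomial (exponents a priori integers).\<close>
definition E_kn :: "nat \<Rightarrow> nat \<Rightarrow> int fls" where
  "E_kn k n = (\<Sum>\<pi> \<in> {\<pi>. \<pi> permutes {1..n} \<and> wex n \<pi> = k}.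
                 fls_X_intpow (int (k * (n - k)) - int (al n \<pi>)))"

definition Ehat_kn :: "nat \<Rightarrow> nat \<Rightarrow> int fls" where
  "Ehat_kn k n = fls_X_intpow (int k - int n) * E_kn k n"

definition narayana :: "nat \<Rightarrow> nat \<Rightarrow> real" where
  "narayana k n = (1 / real n) * real (n choose k) * real (n choose (k - 1))"

end

theory Submission
  imports Defs
begin

lemma card_filter_sum:
  assumes "finite A"
  shows "card {x\<in>A. P x} = (\<Sum>x\<in>A. if P x then 1 else 0)"
proof -
  have "(\<Sum>x\<in>A. if P x then 1 else 0) = (\<Sum>x\<in>{x\<in>A. P x}. (1::nat))"
    using assms by (rule sum.inter_filter[symmetric])
  then show ?thesis by simp
qed

lemma card_pairs_sum:
  assumes "finite A" "finite B"
  shows "card {(a,b). a\<in>A \<and> b\<in>B \<and> P a b} = (\<Sum>a\<in>A. \<Sum>b\<in>B. if P a b then 1 else 0)"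
proof -
  have "{(a,b). a\<in>A \<and> b\<in>B \<and> P a b} = {x\<in>A \<times> B. P (fst x) (snd x)}" by auto
  hence "card {(a,b). a\<in>A \<and> b\<in>B \<and> P a b} = (\<Sum>x\<in>A\<times>B. if P (fst x) (snd x) then 1 else 0)"
    using assms by (simp add: card_filter_sum)
  also have "\<dots> = (\<Sum>a\<in>A. \<Sum>b\<in>B. if P a b then 1 else 0)"
    by (simp add: sum.cartesian_product case_prod_beta)
  finally show ?thesis .
qed

lemma mod_lin:
  assumes "1 \<le> p" "p \<le> n" "1 \<le> h" "h \<le> n"
  shows "(int p - int h) mod int n = (if h \<le> p then int p - int h else int p - int h + int n)"
proof (cases "h \<le> p")
  case True
  then show ?thesis using assms by (simp add: mod_pos_pos_trivial)
next
  case False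
  have "(int p - int h) mod int n = (int p - int h + int n) mod int n" by simp
  also have "\<dots> = int p - int h + int n" using assms False by (intro mod_pos_pos_trivial) auto
  finally show ?thesis using False by simp
qed

lemma aligned_iff:
  assumes p: "\<pi> permutes {1..n}" and a: "a \<in> {1..n}" and b: "b \<in> {1..n}"
  shows "aligned n \<pi> a b \<longleftrightarrow> a \<noteq> b \<and>
     ((a \<le> \<pi> a \<and> \<pi> b < b \<and> (\<pi> a < \<pi> b \<or> b < a)) \<or>
      (a \<le> \<pi> a \<and> b < a \<and> \<pi> a < \<pi> b) \<or>
      (b < a \<and> \<pi> a < \<pi> b \<and> \<pi> b < b))"
proof -
  have pa: "\<pi> a \<in> {1..n}" and pb: "\<pi> b \<in> {1..n}" using permutes_in_image[OF p] a b by blast+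
  have inj: "\<pi> a = \<pi> b \<longleftrightarrow> a = b" using p by (metis permutes_inj injD)
  note m = mod_lin[of _ n]
  show ?thesis
    unfolding aligned_def cyc_order_def
    using a b pa pb inj
    by (auto simp: m split: if_splits)
qed

lemma sum_perm_reindex:
  assumes p: "\<pi> permutes S"
  shows "(\<Sum>x\<in>S. f (\<pi> x)) = (\<Sum>x\<in>S. f x)"
  using sum.reindex_bij_betw[OF permutes_imp_bij[OF p], of f] .

lemma gap_lemma:
  fixes n g :: nat
  assumes p: "\<pi> permutes {1..n}"
  shows "(\<Sum>x\<in>{1..n}. if x \<le> g \<and> g < \<pi> x then 1 else (0::nat)) =
         (\<Sum>x\<in>{1..n}. if \<pi> x \<le> g \<and> g < x then 1 else 0)"
proof -
  let ?I = "{1..n::nat}"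
  have e1: "(\<Sum>x\<in>?I. if x \<le> g then 1 else (0::nat)) =
     (\<Sum>x\<in>?I. if x \<le> g \<and> \<pi> x \<le> g then 1 else 0) + (\<Sum>x\<in>?I. if x \<le> g \<and> g < \<pi> x then 1 else 0)"
    by (subst sum.distrib[symmetric]) (rule sum.cong, auto)
  have e2: "(\<Sum>x\<in>?I. if \<pi> x \<le> g then 1 else (0::nat)) =
     (\<Sum>x\<in>?I. if x \<le> g \<and> \<pi> x \<le> g then 1 else 0) + (\<Sum>x\<in>?I. if \<pi> x \<le> g \<and> g < x then 1 else 0)"
    by (subst sum.distrib[symmetric]) (rule sum.cong, auto)
  have e3: "(\<Sum>x\<in>?I. if \<pi> x \<le> g then 1 else (0::nat)) = (\<Sum>x\<in>?I. if x \<le> g then 1 else (0::nat))"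
    using sum_perm_reindex[OF p, of "\<lambda>v. if v \<le> g then 1 else (0::nat)"] by simp
  from e1 e2 e3 show ?thesis by linarith
qed

lemma sum_less_count:
  assumes "c \<in> {1..n}"
  shows "(\<Sum>x\<in>{1..n}. if x < c then 1 else (0::nat)) = c - 1"
proof -
  have "(\<Sum>x\<in>{1..n}. if x < c then 1 else (0::nat)) = card {x\<in>{1..n}. x < c}"
    by (rule card_filter_sum[symmetric]) simp
  also have "{x\<in>{1..n}. x < c} = {1..<c}" using assms by auto
  finally show ?thesis by simp
qed

lemma sum_between_count:
  assumes "c \<in> {1..n}" "d \<in> {1..n}" "c < d"
  shows "(\<Sum>x\<in>{1..n}. if c < x \<and> x < d then 1 else (0::nat)) = d - c - 1"
proof -
  have "(\<Sum>x\<in>{1..n}. if c < x \<and> x < d then 1 else (0::nat)) = card {x\<in>{1..n}. c < x \<and> x < d}"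
    by (rule card_filter_sum[symmetric]) simp
  also have "{x\<in>{1..n}. c < x \<and> x < d} = {c<..<d}" using assms by auto
  finally show ?thesis by simp
qed

definition crs :: "nat \<Rightarrow> (nat \<Rightarrow> nat) \<Rightarrow> nat" where
  "crs n \<pi> = card {(x,y). x\<in>{1..n} \<and> y\<in>{1..n} \<and> x<y \<and> y \<le> \<pi> x \<and> \<pi> x < \<pi> y}
            + card {(x,y). x\<in>{1..n} \<and> y\<in>{1..n} \<and> x<y \<and> \<pi> x < \<pi> y \<and> \<pi> y < x}"

lemma aligned_asym:
  assumes p: "\<pi> permutes {1..n}" and a: "a \<in> {1..n}" and b: "b \<in> {1..n}"
    and "aligned n \<pi> a b"
  shows "\<not> aligned n \<pi> b a"
  using assms aligned_iff[OF p a b] aligned_iff[OF p b a] by auto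

lemma al_eq_card:
  assumes p: "\<pi> permutes {1..n}"
  shows "al n \<pi> = card {(a,b). a\<in>{1..n} \<and> b\<in>{1..n} \<and> aligned n \<pi> a b}"
proof -
  let ?S = "{(a,b). a\<in>{1..n} \<and> b\<in>{1..n} \<and> aligned n \<pi> a b}"
  have "alignments n \<pi> = (\<lambda>(a,b). {a,b}) ` ?S"
    unfolding alignments_def by auto
  moreover have "inj_on (\<lambda>(a,b). {a,b}) ?S"
  proof (rule inj_onI)
    fix x y assume x: "x \<in> ?S" and y: "y \<in> ?S" and e: "(\<lambda>(a,b). {a::nat,b}) x = (\<lambda>(a,b). {a,b}) y"
    obtain a b where xab: "x = (a,b)" by (cases x)
    obtain c d where ycd: "y = (c,d)" by (cases y)
    from e xab ycd have "{a,b} = {c,d}" by simp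
    hence "(a = c \<and> b = d) \<or> (a = d \<and> b = c)" by (auto simp: doubleton_eq_iff)
    moreover have "\<not> (a = d \<and> b = c)"
      using aligned_asym[OF p] x y xab ycd by auto
    ultimately show "x = y" using xab ycd by auto
  qed
  ultimately show ?thesis unfolding al_def by (simp add: card_image)
qed

lemma al_point:
  assumes p: "\<pi> permutes {1..n}" and a: "a \<in> {1..n}" and b: "b \<in> {1..n}"
  shows "(if aligned n \<pi> a b then 1 else 0) =
        (if a \<le> \<pi> a \<and> \<pi> b < b \<and> (\<pi> a < \<pi> b \<or> b < a) then 1 else (0::nat)) +
        (if a \<le> \<pi> a \<and> b < a \<and> \<pi> a < \<pi> b then 1 else 0) +
        (if b < a \<and> \<pi> a < \<pi> b \<and> \<pi> b < b then 1 else 0)"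
proof -
  define P1 where "P1 = (a \<le> \<pi> a \<and> \<pi> b < b \<and> (\<pi> a < \<pi> b \<or> b < a))"
  define P2 where "P2 = (a \<le> \<pi> a \<and> b < a \<and> \<pi> a < \<pi> b)"
  define P3 where "P3 = (b < a \<and> \<pi> a < \<pi> b \<and> \<pi> b < b)"
  have e: "aligned n \<pi> a b = (P1 \<or> P2 \<or> P3)"
    unfolding aligned_iff[OF p a b] P1_def P2_def P3_def by auto
  have x: "\<not> (P1 \<and> P2)" "\<not> (P1 \<and> P3)" "\<not> (P2 \<and> P3)"
    unfolding P1_def P2_def P3_def by auto
  show ?thesis unfolding e P1_def[symmetric] P2_def[symmetric] P3_def[symmetric]
    using x by auto
qed

lemma al_crs_identity:
  assumes p: "\<pi> permutes {1..n}"
  shows "al n \<pi> + crs n \<pi> + (n - wex n \<pi>) = wex n \<pi> * (n - wex n \<pi>)"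
proof -
  let ?I = "{1..n::nat}"
  have fI: "finite ?I" by simp
  have inI: "\<And>x. x \<in> ?I \<Longrightarrow> \<pi> x \<in> ?I" using permutes_in_image[OF p] by blast
  have inj: "\<And>x y. \<pi> x = \<pi> y \<longleftrightarrow> x = y" using p by (metis permutes_inj injD)
  define k where "k = wex n \<pi>"
  define cN where "cN = (\<Sum>b\<in>?I. if \<pi> b < b then 1 else (0::nat))"
  have kdef: "k = (\<Sum>a\<in>?I. if a \<le> \<pi> a then 1 else (0::nat))"
    unfolding k_def wex_def by (rule card_filter_sum) simp
  have kN: "k + cN = n"
  proof -
    have "k + cN = (\<Sum>a\<in>?I. 1::nat)"
      unfolding kdef cN_def by (subst sum.distrib[symmetric]) (rule sum.cong, auto)
    then show ?thesis by simp
  qed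
  define A1 where "A1 = (\<Sum>a\<in>?I. \<Sum>b\<in>?I. if a \<le> \<pi> a \<and> \<pi> b < b \<and> (\<pi> a < \<pi> b \<or> b < a) then 1 else (0::nat))"
  define A2 where "A2 = (\<Sum>a\<in>?I. \<Sum>b\<in>?I. if a \<le> \<pi> a \<and> b < a \<and> \<pi> a < \<pi> b then 1 else (0::nat))"
  define A3 where "A3 = (\<Sum>a\<in>?I. \<Sum>b\<in>?I. if b < a \<and> \<pi> a < \<pi> b \<and> \<pi> b < b then 1 else (0::nat))"
  define C1 where "C1 = (\<Sum>x\<in>?I. \<Sum>y\<in>?I. if x<y \<and> y \<le> \<pi> x \<and> \<pi> x < \<pi> y then 1 else (0::nat))"
  define C2 where "C2 = (\<Sum>x\<in>?I. \<Sum>y\<in>?I. if x<y \<and> \<pi> x < \<pi> y \<and> \<pi> y < x then 1 else (0::nat))"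
  define Q1 where "Q1 = (\<Sum>x\<in>?I. \<Sum>y\<in>?I. if x<y \<and> y \<le> \<pi> x \<and> y \<le> \<pi> y then 1 else (0::nat))"
  define Q2 where "Q2 = (\<Sum>x\<in>?I. \<Sum>y\<in>?I. if x<y \<and> \<pi> x < x \<and> \<pi> y < x then 1 else (0::nat))"
  define X where "X = (\<Sum>a\<in>?I. \<Sum>b\<in>?I. if a \<le> \<pi> a \<and> \<pi> b < b \<and> a < b \<and> \<pi> b < \<pi> a then 1 else (0::nat))"
  have al: "al n \<pi> = A1 + A2 + A3"
  proof -
    have "al n \<pi> = (\<Sum>a\<in>?I. \<Sum>b\<in>?I. if aligned n \<pi> a b then 1 else (0::nat))"
      unfolding al_eq_card[OF p] by (rule card_pairs_sum[OF fI fI])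
    also have "\<dots> = A1 + A2 + A3"
      unfolding A1_def A2_def A3_def sum.distrib[symmetric]
    proof (rule sum.cong[OF refl], rule sum.cong[OF refl])
      fix a b assume a: "a \<in> ?I" and b: "b \<in> ?I"
      show "(if aligned n \<pi> a b then 1 else 0) =
        (if a \<le> \<pi> a \<and> \<pi> b < b \<and> (\<pi> a < \<pi> b \<or> b < a) then 1 else (0::nat)) +
        (if a \<le> \<pi> a \<and> b < a \<and> \<pi> a < \<pi> b then 1 else 0) +
        (if b < a \<and> \<pi> a < \<pi> b \<and> \<pi> b < b then 1 else 0)"
        by (rule al_point[OF p a b])
    qed
    finally show ?thesis .
  qed
  have cr: "crs n \<pi> = C1 + C2"
    unfolding crs_def C1_def C2_def by (simp only: card_pairs_sum[OF fI fI])
  have s1: "A1 + X = k * cN"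
  proof -
    have "A1 + X = (\<Sum>a\<in>?I. \<Sum>b\<in>?I. (if a \<le> \<pi> a then 1 else (0::nat)) * (if \<pi> b < b then 1 else 0))"
      unfolding A1_def X_def sum.distrib[symmetric]
    proof (rule sum.cong[OF refl], rule sum.cong[OF refl])
      fix a b assume a: "a \<in> ?I" and b: "b \<in> ?I"
      show "(if a \<le> \<pi> a \<and> \<pi> b < b \<and> (\<pi> a < \<pi> b \<or> b < a) then 1 else 0) +
         (if a \<le> \<pi> a \<and> \<pi> b < b \<and> a < b \<and> \<pi> b < \<pi> a then 1 else 0) =
         (if a \<le> \<pi> a then 1 else (0::nat)) * (if \<pi> b < b then 1 else 0)"
        using inj[of a b] by auto
    qed
    also have "\<dots> = k * cN" unfolding kdef cN_def by (simp only: sum_product)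
    finally show ?thesis .
  qed
  have s2: "A2 + C1 = Q1"
  proof -
    have "A2 = (\<Sum>x\<in>?I. \<Sum>y\<in>?I. if y \<le> \<pi> y \<and> x < y \<and> \<pi> y < \<pi> x then 1 else (0::nat))"
      unfolding A2_def by (rule sum.swap)
    then show ?thesis unfolding C1_def Q1_def
      apply (simp only: sum.distrib[symmetric])
      apply (intro sum.cong refl)
      using inj by (auto simp: less_le_trans le_less_trans)
  qed
  have s3: "A3 + C2 = Q2"
  proof -
    have "A3 = (\<Sum>x\<in>?I. \<Sum>y\<in>?I. if x < y \<and> \<pi> y < \<pi> x \<and> \<pi> x < x then 1 else (0::nat))"
      unfolding A3_def by (rule sum.swap)
    then show ?thesis unfolding C2_def Q2_def
      apply (simp only: sum.distrib[symmetric])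
      apply (intro sum.cong refl)
      using inj by auto
  qed
  have sF: "X + (\<Sum>b\<in>?I. if \<pi> b < b then \<pi> b else 0) = (\<Sum>b\<in>?I. if \<pi> b < b then b else 0)"
  proof -
    define M1 where "M1 = (\<Sum>b\<in>?I. \<Sum>a\<in>?I. if \<pi> b < b \<and> \<pi> a < a \<and> a < b \<and> \<pi> b < \<pi> a then 1 else (0::nat))"
    define M2 where "M2 = (\<Sum>b\<in>?I. \<Sum>a\<in>?I. if \<pi> b < b \<and> b < a \<and> \<pi> a < \<pi> b then 1 else (0::nat))"
    have perb: "(\<Sum>a\<in>?I. if a \<le> \<pi> a \<and> \<pi> b < b \<and> a < b \<and> \<pi> b < \<pi> a then 1 else (0::nat))
        + (\<Sum>a\<in>?I. if \<pi> b < b \<and> \<pi> a < a \<and> a < b \<and> \<pi> b < \<pi> a then 1 else (0::nat))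
        + (if \<pi> b < b then \<pi> b else 0)
        = (if \<pi> b < b then b else 0) + (\<Sum>a\<in>?I. if \<pi> b < b \<and> b < a \<and> \<pi> a < \<pi> b then 1 else (0::nat))"
      if b: "b \<in> ?I" for b
    proof (cases "\<pi> b < b")
      case True
      have ei: "(\<Sum>a\<in>?I. if a < b \<and> \<pi> b < \<pi> a then 1 else (0::nat)) + (\<Sum>a\<in>?I. if a < b \<and> \<pi> a < \<pi> b then 1 else (0::nat)) = b - 1"
      proof -
        have "(\<Sum>a\<in>?I. if a < b \<and> \<pi> b < \<pi> a then 1 else (0::nat)) + (\<Sum>a\<in>?I. if a < b \<and> \<pi> a < \<pi> b then 1 else (0::nat))
           = (\<Sum>a\<in>?I. if a < b then 1 else (0::nat))"
          unfolding sum.distrib[symmetric] using inj[of _ b] by (intro sum.cong refl) (auto simp: nat_neq_iff)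
        also have "\<dots> = b - 1" using sum_less_count[OF b] .
        finally show ?thesis .
      qed
      have eii: "(\<Sum>a\<in>?I. if a < b \<and> \<pi> a < \<pi> b then 1 else (0::nat)) + (\<Sum>a\<in>?I. if b < a \<and> \<pi> a < \<pi> b then 1 else (0::nat)) = \<pi> b - 1"
      proof -
        have "(\<Sum>a\<in>?I. if a < b \<and> \<pi> a < \<pi> b then 1 else (0::nat)) + (\<Sum>a\<in>?I. if b < a \<and> \<pi> a < \<pi> b then 1 else (0::nat))
           = (\<Sum>a\<in>?I. if \<pi> a < \<pi> b then 1 else (0::nat))"
          unfolding sum.distrib[symmetric] by (intro sum.cong refl) (auto simp: nat_neq_iff)
        also have "\<dots> = (\<Sum>a\<in>?I. if a < \<pi> b then 1 else (0::nat))"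
          using sum_perm_reindex[OF p, of "\<lambda>v. if v < \<pi> b then 1 else (0::nat)"] by simp
        also have "\<dots> = \<pi> b - 1" using sum_less_count[OF inI[OF b]] .
        finally show ?thesis .
      qed
      have eiii: "(\<Sum>a\<in>?I. if a < b \<and> \<pi> b < \<pi> a then 1 else (0::nat)) =
          (\<Sum>a\<in>?I. if a \<le> \<pi> a \<and> \<pi> b < b \<and> a < b \<and> \<pi> b < \<pi> a then 1 else (0::nat))
        + (\<Sum>a\<in>?I. if \<pi> b < b \<and> \<pi> a < a \<and> a < b \<and> \<pi> b < \<pi> a then 1 else (0::nat))"
        unfolding sum.distrib[symmetric] using True by (intro sum.cong refl) auto
      have "1 \<le> b" "1 \<le> \<pi> b" using b inI[OF b] by auto
      then show ?thesis using True ei eii eiii by simp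
    qed simp
    have "X + M1 + (\<Sum>b\<in>?I. if \<pi> b < b then \<pi> b else 0) = (\<Sum>b\<in>?I. if \<pi> b < b then b else 0) + M2"
    proof -
      have "X = (\<Sum>b\<in>?I. \<Sum>a\<in>?I. if a \<le> \<pi> a \<and> \<pi> b < b \<and> a < b \<and> \<pi> b < \<pi> a then 1 else (0::nat))"
        unfolding X_def by (rule sum.swap)
      then have "X + M1 + (\<Sum>b\<in>?I. if \<pi> b < b then \<pi> b else 0) =
        (\<Sum>b\<in>?I. (\<Sum>a\<in>?I. if a \<le> \<pi> a \<and> \<pi> b < b \<and> a < b \<and> \<pi> b < \<pi> a then 1 else (0::nat))
        + (\<Sum>a\<in>?I. if \<pi> b < b \<and> \<pi> a < a \<and> a < b \<and> \<pi> b < \<pi> a then 1 else (0::nat))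
        + (if \<pi> b < b then \<pi> b else 0))"
        unfolding M1_def by (simp only: sum.distrib)
      also have "\<dots> = (\<Sum>b\<in>?I. (if \<pi> b < b then b else 0) + (\<Sum>a\<in>?I. if \<pi> b < b \<and> b < a \<and> \<pi> a < \<pi> b then 1 else (0::nat)))"
        by (rule sum.cong[OF refl]) (rule perb)
      also have "\<dots> = (\<Sum>b\<in>?I. if \<pi> b < b then b else 0) + M2"
        unfolding M2_def by (simp only: sum.distrib)
      finally show ?thesis .
    qed
    moreover have "M1 = M2"
    proof -
      have "M1 = (\<Sum>a\<in>?I. \<Sum>b\<in>?I. if \<pi> b < b \<and> \<pi> a < a \<and> a < b \<and> \<pi> b < \<pi> a then 1 else (0::nat))"
        unfolding M1_def by (rule sum.swap)
      also have "\<dots> = M2" unfolding M2_def by (intro sum.cong refl) auto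
      finally show ?thesis .
    qed
    ultimately show ?thesis by simp
  qed
  have sG: "(\<Sum>b\<in>?I. if \<pi> b < b then b else 0) = (\<Sum>b\<in>?I. if \<pi> b < b then \<pi> b else 0) + cN + Q2 + Q1"
  proof -
    define R1 where "R1 = (\<Sum>b\<in>?I. \<Sum>m\<in>?I. if \<pi> b < b \<and> \<pi> m < m \<and> \<pi> b < m \<and> m < b then 1 else (0::nat))"
    define R2 where "R2 = (\<Sum>b\<in>?I. \<Sum>m\<in>?I. if \<pi> b < b \<and> m \<le> \<pi> m \<and> \<pi> b < m \<and> m < b then 1 else (0::nat))"
    have perb: "(if \<pi> b < b then b else 0) = (if \<pi> b < b then \<pi> b else 0) + (if \<pi> b < b then 1 else 0)
       + (\<Sum>m\<in>?I. if \<pi> b < b \<and> \<pi> m < m \<and> \<pi> b < m \<and> m < b then 1 else (0::nat))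
       + (\<Sum>m\<in>?I. if \<pi> b < b \<and> m \<le> \<pi> m \<and> \<pi> b < m \<and> m < b then 1 else (0::nat))"
      if b: "b \<in> ?I" for b
    proof (cases "\<pi> b < b")
      case True
      have "(\<Sum>m\<in>?I. if \<pi> b < b \<and> \<pi> m < m \<and> \<pi> b < m \<and> m < b then 1 else (0::nat))
          + (\<Sum>m\<in>?I. if \<pi> b < b \<and> m \<le> \<pi> m \<and> \<pi> b < m \<and> m < b then 1 else (0::nat))
          = (\<Sum>m\<in>?I. if \<pi> b < m \<and> m < b then 1 else (0::nat))"
        unfolding sum.distrib[symmetric] using True by (intro sum.cong refl) auto
      also have "\<dots> = b - \<pi> b - 1" using sum_between_count[OF inI[OF b] b True] .
      finally show ?thesis using True by simp
    qed simp
    have "(\<Sum>b\<in>?I. if \<pi> b < b then b else 0) = (\<Sum>b\<in>?I. if \<pi> b < b then \<pi> b else 0) + cN + R1 + R2"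
      unfolding cN_def R1_def R2_def sum.distrib[symmetric] by (rule sum.cong[OF refl]) (rule perb)
    moreover have "R1 = Q2"
    proof -
      have "R1 = (\<Sum>m\<in>?I. \<Sum>b\<in>?I. if \<pi> b < b \<and> \<pi> m < m \<and> \<pi> b < m \<and> m < b then 1 else (0::nat))"
        unfolding R1_def by (rule sum.swap)
      also have "\<dots> = Q2" unfolding Q2_def by (intro sum.cong refl) auto
      finally show ?thesis .
    qed
    moreover have "R2 = Q1"
    proof -
      have "R2 = (\<Sum>m\<in>?I. \<Sum>b\<in>?I. if \<pi> b < b \<and> m \<le> \<pi> m \<and> \<pi> b < m \<and> m < b then 1 else (0::nat))"
        unfolding R2_def by (rule sum.swap)
      also have "\<dots> = (\<Sum>m\<in>?I. \<Sum>x\<in>?I. if m \<le> \<pi> m \<and> x < m \<and> m \<le> \<pi> x then 1 else (0::nat))"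
      proof (rule sum.cong[OF refl])
        fix m assume m: "m \<in> ?I"
        show "(\<Sum>b\<in>?I. if \<pi> b < b \<and> m \<le> \<pi> m \<and> \<pi> b < m \<and> m < b then 1 else (0::nat)) =
              (\<Sum>x\<in>?I. if m \<le> \<pi> m \<and> x < m \<and> m \<le> \<pi> x then 1 else (0::nat))"
        proof (cases "m \<le> \<pi> m")
          case True
          have m1: "1 \<le> m" using m by simp
          have "(\<Sum>b\<in>?I. if \<pi> b < b \<and> m \<le> \<pi> m \<and> \<pi> b < m \<and> m < b then 1 else (0::nat))
             = (\<Sum>b\<in>?I. if \<pi> b \<le> m - 1 \<and> m - 1 < b then 1 else (0::nat))"
          proof (intro sum.cong refl)
            fix x assume "x \<in> ?I"
            show "(if \<pi> x < x \<and> m \<le> \<pi> m \<and> \<pi> x < m \<and> m < x then 1 else (0::nat)) =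
                  (if \<pi> x \<le> m - 1 \<and> m - 1 < x then 1 else 0)"
            proof (cases "x = m")
              case True
              then show ?thesis using \<open>m \<le> \<pi> m\<close> m1 by auto
            next
              case False
              then show ?thesis using \<open>m \<le> \<pi> m\<close> m1 by auto
            qed
          qed
          also have "\<dots> = (\<Sum>x\<in>?I. if x \<le> m - 1 \<and> m - 1 < \<pi> x then 1 else (0::nat))"
            using gap_lemma[OF p, of "m - 1"] by simp
          also have "\<dots> = (\<Sum>x\<in>?I. if m \<le> \<pi> m \<and> x < m \<and> m \<le> \<pi> x then 1 else (0::nat))"
            using True m1 by (intro sum.cong refl) auto
          finally show ?thesis .
        qed simp
      qed
      also have "\<dots> = (\<Sum>x\<in>?I. \<Sum>m\<in>?I. if m \<le> \<pi> m \<and> x < m \<and> m \<le> \<pi> x then 1 else (0::nat))"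
        by (rule sum.swap)
      also have "\<dots> = Q1" unfolding Q1_def by (intro sum.cong refl) auto
      finally show ?thesis .
    qed
    ultimately show ?thesis by simp
  qed
  have "al n \<pi> + crs n \<pi> + cN = k * cN"
    using al cr s1 s2 s3 sF sG by linarith
  moreover have "cN = n - k" using kN by simp
  ultimately show ?thesis unfolding k_def by simp
qed

definition shiftp :: "nat \<Rightarrow> nat \<Rightarrow> nat \<Rightarrow> nat" where
  "shiftp n c i = (if i \<in> {1..n} then (if i + c \<le> n then i + c else i + c - n) else i)"

lemma shiftp_permutes:
  assumes "c < n"
  shows "shiftp n c permutes {1..n}"
proof (rule bij_imp_permutes)
  have sub: "shiftp n c ` {1..n} \<subseteq> {1..n}" using assms by (auto simp: shiftp_def)
  have inj: "inj_on (shiftp n c) {1..n}"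
    by (rule inj_onI) (auto simp: shiftp_def split: if_splits)
  have "shiftp n c ` {1..n} = {1..n}" using endo_inj_surj[OF _ sub inj] by simp
  then show "bij_betw (shiftp n c) {1..n} {1..n}" using inj by (simp add: bij_betw_def)
  show "\<And>x. x \<notin> {1..n} \<Longrightarrow> shiftp n c x = x" unfolding shiftp_def by presburger
qed

lemma shiftp_wex:
  assumes "c < n"
  shows "wex n (shiftp n c) = n - c"
proof -
  have "{i \<in> {1..n}. shiftp n c i \<ge> i} = {1..n-c}"
    using assms by (auto simp: shiftp_def)
  then show ?thesis unfolding wex_def by simp
qed

lemma shiftp_al:
  assumes "c < n"
  shows "al n (shiftp n c) = 0"
proof -
  have p: "shiftp n c permutes {1..n}" using shiftp_permutes[OF assms] .
  have E: "{(a,b). a\<in>{1..n} \<and> b\<in>{1..n} \<and> aligned n (shiftp n c) a b} = {}"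
  proof (safe)
    fix a b assume a: "a \<in> {1..n}" and b: "b \<in> {1..n}" and al: "aligned n (shiftp n c) a b"
    define P1 where "P1 = (a \<le> shiftp n c a \<and> shiftp n c b < b \<and> (shiftp n c a < shiftp n c b \<or> b < a))"
    define P2 where "P2 = (a \<le> shiftp n c a \<and> b < a \<and> shiftp n c a < shiftp n c b)"
    define P3 where "P3 = (b < a \<and> shiftp n c a < shiftp n c b \<and> shiftp n c b < b)"
    have "P1 \<or> P2 \<or> P3" using al unfolding aligned_iff[OF p a b] P1_def P2_def P3_def by blast
    moreover have "\<not> P1" unfolding P1_def using a b assms by (auto simp: shiftp_def)
    moreover have "\<not> P2" unfolding P2_def using a b assms by (auto simp: shiftp_def)
    moreover have "\<not> P3" unfolding P3_def using a b assms by (auto simp: shiftp_def)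
    ultimately show "(a, b) \<in> {}" by blast
  qed
  show ?thesis unfolding al_eq_card[OF p] E by (rule card.empty)
qed

definition nocross :: "nat \<Rightarrow> (nat \<Rightarrow> nat) \<Rightarrow> bool" where
  "nocross m \<pi> \<longleftrightarrow> (\<forall>x\<in>{1..m}. \<forall>y\<in>{1..m}. x < y \<longrightarrow>
      \<not> (y \<le> \<pi> x \<and> \<pi> x < \<pi> y) \<and> \<not> (\<pi> x < \<pi> y \<and> \<pi> y < x))"

definition allw :: "nat \<Rightarrow> (nat \<Rightarrow> nat) \<Rightarrow> nat set" where
  "allw m \<pi> = {a \<in> {1..m}. a \<le> \<pi> a \<and> (\<forall>i\<in>{1..m}. \<not> (i < a \<and> a \<le> \<pi> i))
      \<and> (\<forall>j\<in>{1..m}. \<not> (\<pi> j < \<pi> a \<and> \<pi> a < j))}"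

definition insp :: "nat \<Rightarrow> (nat \<Rightarrow> nat) \<Rightarrow> nat \<Rightarrow> nat \<Rightarrow> nat" where
  "insp n \<pi> a = (\<lambda>x. if x = a then n + 1 else if x = n + 1 then \<pi> a else \<pi> x)"

lemma crs_zero_iff:
  "crs n \<pi> = 0 \<longleftrightarrow> nocross n \<pi>"
proof -
  have f1: "finite {(x,y). x\<in>{1..n} \<and> y\<in>{1..n} \<and> x<y \<and> y \<le> \<pi> x \<and> \<pi> x < \<pi> y}"
    by (rule finite_subset[of _ "{1..n} \<times> {1..n}"]) auto
  have f2: "finite {(x,y). x\<in>{1..n} \<and> y\<in>{1..n} \<and> x<y \<and> \<pi> x < \<pi> y \<and> \<pi> y < x}"
    by (rule finite_subset[of _ "{1..n} \<times> {1..n}"]) auto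
  have e1: "({(x,y). x\<in>{1..n} \<and> y\<in>{1..n} \<and> x<y \<and> y \<le> \<pi> x \<and> \<pi> x < \<pi> y} = {}) =
     (\<forall>x\<in>{1..n}. \<forall>y\<in>{1..n}. \<not> (x<y \<and> y \<le> \<pi> x \<and> \<pi> x < \<pi> y))" by blast
  have e2: "({(x,y). x\<in>{1..n} \<and> y\<in>{1..n} \<and> x<y \<and> \<pi> x < \<pi> y \<and> \<pi> y < x} = {}) =
     (\<forall>x\<in>{1..n}. \<forall>y\<in>{1..n}. \<not> (x<y \<and> \<pi> x < \<pi> y \<and> \<pi> y < x))" by blast
  have "crs n \<pi> = 0 \<longleftrightarrow>
    {(x,y). x\<in>{1..n} \<and> y\<in>{1..n} \<and> x<y \<and> y \<le> \<pi> x \<and> \<pi> x < \<pi> y} = {} \<and>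
    {(x,y). x\<in>{1..n} \<and> y\<in>{1..n} \<and> x<y \<and> \<pi> x < \<pi> y \<and> \<pi> y < x} = {}"
    unfolding crs_def using f1 f2 by (simp only: add_is_0 card_eq_0_iff) blast
  also have "\<dots> \<longleftrightarrow> nocross n \<pi>" unfolding e1 e2 nocross_def by blast
  finally show ?thesis .
qed

lemma allw_sub: "allw m \<pi> \<subseteq> {1..m}"
  unfolding allw_def by auto

lemma card_allw_le: "card (allw m \<pi>) \<le> m"
  using card_mono[OF _ allw_sub, of m \<pi>] by simp


lemma perm_range:
  assumes p: "\<pi> permutes {1..m}" and x: "x \<in> {1..m}"
  shows "\<pi> x \<in> {1..m}"
  using permutes_in_image[OF p] x by blast

lemma perm_out:
  assumes p: "\<pi> permutes {1..m}" and x: "x \<notin> {1..m}"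
  shows "\<pi> x = x"
  using permutes_not_in[OF p x] .

lemma perm_inj:
  assumes p: "\<pi> permutes S"
  shows "\<pi> x = \<pi> y \<longleftrightarrow> x = y"
  using p by (metis permutes_inj injD)

context
  fixes n :: nat and \<pi> :: "nat \<Rightarrow> nat" and a :: nat
  assumes p: "\<pi> permutes {1..n}" and nc: "nocross n \<pi>" and aa: "a \<in> allw n \<pi>"
begin

lemma ins_a: "a \<in> {1..n}" "a \<le> \<pi> a"
  "\<And>i. i \<in> {1..n} \<Longrightarrow> \<not> (i < a \<and> a \<le> \<pi> i)"
  "\<And>j. j \<in> {1..n} \<Longrightarrow> \<not> (\<pi> j < \<pi> a \<and> \<pi> a < j)"
  using aa unfolding allw_def by auto

lemma insp_comp:
  "insp n \<pi> a = \<pi> \<circ> Transposition.transpose a (n+1)"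
proof -
  have "\<pi> (n+1) = n+1" using perm_out[OF p] by simp
  then show ?thesis by (auto simp: insp_def fun_eq_iff Transposition.transpose_def)
qed

lemma ins_permutes: "insp n \<pi> a permutes {1..n+1}"
proof -
  have "\<pi> permutes {1..n+1}" using p by (rule permutes_subset) auto
  moreover have "Transposition.transpose a (n+1) permutes {1..n+1}"
    using ins_a(1) by (intro permutes_swap_id) auto
  ultimately show ?thesis unfolding insp_comp by (intro permutes_compose)
qed

lemma ins_nocross: "nocross (n+1) (insp n \<pi> a)"
  unfolding nocross_def
proof (intro ballI impI)
  fix x y assume x: "x \<in> {1..n+1}" and y: "y \<in> {1..n+1}" and xy: "x < y"
  let ?s = "insp n \<pi> a"
  have pa: "\<pi> a \<in> {1..n}" using perm_range[OF p ins_a(1)] .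
  show "\<not> (y \<le> ?s x \<and> ?s x < ?s y) \<and> \<not> (?s x < ?s y \<and> ?s y < x)"
  proof (cases "x = a")
    case True
    show ?thesis
    proof (cases "y = n+1")
      case True
      then show ?thesis using \<open>x = a\<close> pa by (auto simp: insp_def)
    next
      case False
      then have "y \<in> {1..n}" using y by auto
      then have "\<pi> y \<in> {1..n}" using perm_range[OF p] by blast
      then show ?thesis using \<open>x = a\<close> False xy by (auto simp: insp_def)
    qed
  next
    case xa: False
    show ?thesis
    proof (cases "x = n+1")
      case True
      then show ?thesis using xy y by auto
    next
      case xn: False
      then have xI: "x \<in> {1..n}" using x by auto
      then have pxI: "\<pi> x \<in> {1..n}" using perm_range[OF p] by blast
      have sx: "?s x = \<pi> x" using xa xn by (simp add: insp_def)
      show ?thesis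
      proof (cases "y = a")
        case True
        then show ?thesis using sx ins_a(3)[OF xI] xy pxI ins_a(1) by (auto simp: insp_def)
      next
        case ya: False
        show ?thesis
        proof (cases "y = n+1")
          case True
          have sy: "?s y = \<pi> a" using True ins_a(1) by (auto simp: insp_def)
          show ?thesis using sx sy ins_a(4)[OF xI] pxI True by auto
        next
          case yn: False
          then have yI: "y \<in> {1..n}" using y by auto
          have sy: "?s y = \<pi> y" using ya yn by (simp add: insp_def)
          show ?thesis using nc xI yI xy sx sy unfolding nocross_def by auto
        qed
      qed
    qed
  qed
qed

lemma ins_wex: "wex (n+1) (insp n \<pi> a) = wex n \<pi>"
proof -
  have pa: "\<pi> a \<in> {1..n}" using perm_range[OF p ins_a(1)] .
  have "{i \<in> {1..n+1}. insp n \<pi> a i \<ge> i} = {i \<in> {1..n}. \<pi> i \<ge> i}"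
  proof (intro set_eqI iffI)
    fix i assume i: "i \<in> {i \<in> {1..n+1}. insp n \<pi> a i \<ge> i}"
    show "i \<in> {i \<in> {1..n}. \<pi> i \<ge> i}"
    proof (cases "i = n+1")
      case True then show ?thesis using i pa ins_a(1) by (auto simp: insp_def)
    next
      case False then show ?thesis using i ins_a(2) by (auto simp: insp_def split: if_splits)
    qed
  next
    fix i assume i: "i \<in> {i \<in> {1..n}. \<pi> i \<ge> i}"
    then show "i \<in> {i \<in> {1..n+1}. insp n \<pi> a i \<ge> i}"
      by (auto simp: insp_def)
  qed
  then show ?thesis unfolding wex_def by simp
qed

lemma ins_allw: "allw (n+1) (insp n \<pi> a) = insert a {a' \<in> allw n \<pi>. a' < a}"
proof (intro set_eqI iffI)
  let ?s = "insp n \<pi> a"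
  have aI: "a \<in> {1..n}" using ins_a(1) .
  have pa: "\<pi> a \<in> {1..n}" using perm_range[OF p aI] .
  fix c
  {
    assume c: "c \<in> allw (n+1) ?s"
    then have cI: "c \<in> {1..n+1}" and cw: "c \<le> ?s c"
      and c1: "\<And>i. i \<in> {1..n+1} \<Longrightarrow> \<not> (i < c \<and> c \<le> ?s i)"
      and c2: "\<And>j. j \<in> {1..n+1} \<Longrightarrow> \<not> (?s j < ?s c \<and> ?s c < j)"
      unfolding allw_def by auto
    show "c \<in> insert a {a' \<in> allw n \<pi>. a' < a}"
    proof (cases "c = a")
      case True then show ?thesis by simp
    next
      case ca: False
      have cn: "c \<noteq> n+1"
      proof
        assume "c = n+1"
        then have "?s c = \<pi> a" using aI by (auto simp: insp_def)
        then show False using cw \<open>c = n+1\<close> pa by auto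
      qed
      have cI': "c \<in> {1..n}" using cI cn by auto
      have sc: "?s c = \<pi> c" using ca cn by (simp add: insp_def)
      have "\<not> (a < c)"
      proof
        assume "a < c"
        have "?s a = n+1" by (simp add: insp_def)
        then show False using c1[of a] aI \<open>a < c\<close> cI by auto
      qed
      then have lt: "c < a" using ca by auto
      have "c \<in> allw n \<pi>"
        unfolding allw_def
      proof (intro CollectI conjI ballI)
        show "c \<in> {1..n}" by (rule cI')
        show "c \<le> \<pi> c" using cw sc by simp
        fix i assume i: "i \<in> {1..n}"
        show "\<not> (i < c \<and> c \<le> \<pi> i)"
        proof (cases "i = a")
          case True then show ?thesis using lt by auto
        next
          case False
          then have "?s i = \<pi> i" using i by (auto simp: insp_def)
          then show ?thesis using c1[of i] i by auto
        qed
      next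
        fix j assume j: "j \<in> {1..n}"
        show "\<not> (\<pi> j < \<pi> c \<and> \<pi> c < j)"
        proof (cases "j = a")
          case True then show ?thesis using lt ins_a(2) by auto
        next
          case False
          then have "?s j = \<pi> j" using j by (auto simp: insp_def)
          then show ?thesis using c2[of j] j sc by auto
        qed
      qed
      then show ?thesis using lt by simp
    qed
  }
  {
    assume c: "c \<in> insert a {a' \<in> allw n \<pi>. a' < a}"
    show "c \<in> allw (n+1) ?s"
    proof (cases "c = a")
      case True
      show ?thesis unfolding allw_def
      proof (intro CollectI conjI ballI)
        show "c \<in> {1..n+1}" using True aI by auto
        show "c \<le> ?s c" using True aI by (simp add: insp_def)
        fix i assume i: "i \<in> {1..n+1}"
        show "\<not> (i < c \<and> c \<le> ?s i)"
        proof (cases "i = n+1")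
          case True then show ?thesis using \<open>c = a\<close> aI by auto
        next
          case False
          show ?thesis
          proof (cases "i = a")
            case True then show ?thesis using \<open>c = a\<close> by auto
          next
            case ia: False
            then have "?s i = \<pi> i" using False by (simp add: insp_def)
            then show ?thesis using ins_a(3)[of i] i False \<open>c = a\<close> by auto
          qed
        qed
      next
        fix j assume j: "j \<in> {1..n+1}"
        show "\<not> (?s j < ?s c \<and> ?s c < j)" using True j by (auto simp: insp_def)
      qed
    next
      case ca: False
      then have cA: "c \<in> allw n \<pi>" and lt: "c < a" using c by auto
      then have cI: "c \<in> {1..n}" and cw: "c \<le> \<pi> c"
        and c1: "\<And>i. i \<in> {1..n} \<Longrightarrow> \<not> (i < c \<and> c \<le> \<pi> i)"
        and c2: "\<And>j. j \<in> {1..n} \<Longrightarrow> \<not> (\<pi> j < \<pi> c \<and> \<pi> c < j)"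
        unfolding allw_def by auto
      have sc: "?s c = \<pi> c" using ca cI by (auto simp: insp_def)
      have pca: "\<pi> c < \<pi> a"
      proof -
        have "\<not> (c < a \<and> a \<le> \<pi> c)" using ins_a(3)[OF cI] .
        then show ?thesis using lt ins_a(2) by auto
      qed
      show ?thesis unfolding allw_def
      proof (intro CollectI conjI ballI)
        show "c \<in> {1..n+1}" using cI by auto
        show "c \<le> ?s c" using sc cw by simp
        fix i assume i: "i \<in> {1..n+1}"
        show "\<not> (i < c \<and> c \<le> ?s i)"
        proof (cases "i = n+1")
          case True then show ?thesis using cI by auto
        next
          case False
          show ?thesis
          proof (cases "i = a")
            case True then show ?thesis using lt by auto
          next
            case ia: False
            then have "?s i = \<pi> i" using False by (simp add: insp_def)
            then show ?thesis using c1[of i] i False by auto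
          qed
        qed
      next
        fix j assume j: "j \<in> {1..n+1}"
        show "\<not> (?s j < ?s c \<and> ?s c < j)"
        proof (cases "j = n+1")
          case True
          then have "?s j = \<pi> a" using aI by (auto simp: insp_def)
          then show ?thesis using sc pca by auto
        next
          case False
          show ?thesis
          proof (cases "j = a")
            case True then show ?thesis using sc cI perm_range[OF p cI] by (auto simp: insp_def)
          next
            case ja: False
            then have "?s j = \<pi> j" using False by (simp add: insp_def)
            then show ?thesis using c2[of j] j False sc by auto
          qed
        qed
      qed
    qed
  }
qed

end

lemma gap_card:
  fixes m g :: nat
  assumes p: "\<pi> permutes {1..m}"
  shows "card {x\<in>{1..m}. x \<le> g \<and> g < \<pi> x} = card {x\<in>{1..m}. \<pi> x \<le> g \<and> g < x}"
proof -
  have "card {x\<in>{1..m}. x \<le> g \<and> g < \<pi> x} = (\<Sum>x\<in>{1..m}. if x \<le> g \<and> g < \<pi> x then 1 else 0)"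
    by (rule card_filter_sum) simp
  also have "\<dots> = (\<Sum>x\<in>{1..m}. if \<pi> x \<le> g \<and> g < x then 1 else 0)" by (rule gap_lemma[OF p])
  also have "\<dots> = card {x\<in>{1..m}. \<pi> x \<le> g \<and> g < x}"
    by (rule card_filter_sum[symmetric]) simp
  finally show ?thesis .
qed

lemma ncD:
  assumes "nocross m \<pi>" "x \<in> {1..m}" "y \<in> {1..m}" "x < y"
  shows "\<not> (y \<le> \<pi> x \<and> \<pi> x < \<pi> y)" "\<not> (\<pi> x < \<pi> y \<and> \<pi> y < x)"
  using assms unfolding nocross_def by auto

definition rmv :: "nat \<Rightarrow> (nat \<Rightarrow> nat) \<Rightarrow> nat \<Rightarrow> nat" where
  "rmv n \<pi> = (\<lambda>x. if x = inv \<pi> (n+1) then \<pi> (n+1) else if x = n+1 then n+1 else \<pi> x)"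

context
  fixes n :: nat and \<pi> :: "nat \<Rightarrow> nat"
  assumes p: "\<pi> permutes {1..n+1}" and nc: "nocross (n+1) \<pi>" and h: "\<pi> (n+1) \<noteq> n+1"
begin

definition "ra = inv \<pi> (n+1)"

lemma rm_a: "ra \<in> {1..n}" "\<pi> ra = n+1"
proof -
  show pa: "\<pi> ra = n+1" unfolding ra_def using permutes_inverses(1)[OF p] .
  have "ra \<in> {1..n+1}" using permutes_in_image[OF p, of ra] pa by simp
  moreover have "ra \<noteq> n+1" using pa h by auto
  ultimately show "ra \<in> {1..n}" by auto
qed

lemma rm_b: "\<pi> (n+1) \<in> {1..n}"
proof -
  have "\<pi> (n+1) \<in> {1..n+1}" using perm_range[OF p] by simp
  then show ?thesis using h by auto
qed

lemma rm_range: "x \<in> {1..n+1} \<Longrightarrow> x \<noteq> ra \<Longrightarrow> \<pi> x \<in> {1..n}"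
proof -
  assume x: "x \<in> {1..n+1}" "x \<noteq> ra"
  have "\<pi> x \<in> {1..n+1}" using perm_range[OF p x(1)] .
  moreover have "\<pi> x \<noteq> n+1" using rm_a(2) x(2) perm_inj[OF p] by metis
  ultimately show "\<pi> x \<in> {1..n}" by auto
qed

lemma rm_ab: "ra \<le> \<pi> (n+1)"
proof (rule ccontr)
  assume "\<not> ra \<le> \<pi> (n+1)"
  then have lt: "\<pi> (n+1) < ra" by simp
  have b1: "1 \<le> \<pi> (n+1)" using rm_b by simp
  have "n+1 \<in> {x\<in>{1..n+1}. \<pi> x \<le> ra - 1 \<and> ra - 1 < x}" using lt rm_a(1) by auto
  then have "card {x\<in>{1..n+1}. \<pi> x \<le> ra - 1 \<and> ra - 1 < x} \<noteq> 0" by (auto simp: card_eq_0_iff)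
  then have "card {x\<in>{1..n+1}. x \<le> ra - 1 \<and> ra - 1 < \<pi> x} \<noteq> 0" using gap_card[OF p] by simp
  then obtain x where x: "x \<in> {1..n+1}" "x \<le> ra - 1" "ra - 1 < \<pi> x"
    by (metis (no_types, lifting) card.empty empty_Collect_eq)
  have xa: "x < ra" "ra \<le> \<pi> x" using x lt b1 by auto
  have "\<pi> x \<in> {1..n}" using rm_range[OF x(1)] xa by auto
  then have "\<pi> x < \<pi> ra" using rm_a(2) by auto
  moreover have "ra \<in> {1..n+1}" using rm_a(1) by auto
  ultimately show False using ncD(1)[OF nc x(1) _ xa(1)] xa(2) by blast
qed

lemma rmv_alt: "rmv n \<pi> x = (if x = ra then \<pi> (n+1) else if x = n+1 then n+1 else \<pi> x)"
  by (simp add: rmv_def ra_def)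

lemma rmv_simps: "rmv n \<pi> ra = \<pi> (n+1)" "x \<noteq> ra \<Longrightarrow> x \<noteq> n+1 \<Longrightarrow> rmv n \<pi> x = \<pi> x"
  "rmv n \<pi> (n+1) = n+1"
  using rm_a(1) by (auto simp: rmv_alt)

lemma rmv_eq: "rmv n \<pi> = \<pi> \<circ> Transposition.transpose ra (n+1)"
proof
  fix x
  have an: "ra \<noteq> n+1" using rm_a(1) by auto
  show "rmv n \<pi> x = (\<pi> \<circ> Transposition.transpose ra (n+1)) x"
    using an rm_a(2) by (auto simp: rmv_alt Transposition.transpose_def)
qed

lemma rm_permutes: "rmv n \<pi> permutes {1..n}"
proof -
  have "Transposition.transpose ra (n+1) permutes {1..n+1}"
    using rm_a(1) by (intro permutes_swap_id) auto
  then have "rmv n \<pi> permutes {1..n+1}" unfolding rmv_eq by (intro permutes_compose p)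
  moreover have "\<And>x. x \<in> {1..n+1} - {1..n} \<Longrightarrow> rmv n \<pi> x = x"
  proof -
    fix x assume "x \<in> {1..n+1} - {1..n}"
    then have "x = n+1" by auto
    then show "rmv n \<pi> x = x" using rmv_simps(3) by simp
  qed
  ultimately show ?thesis by (rule permutes_superset)
qed

lemma rm_nocross: "nocross n (rmv n \<pi>)"
  unfolding nocross_def
proof (intro ballI impI)
  fix x y assume x: "x \<in> {1..n}" and y: "y \<in> {1..n}" and xy: "x < y"
  let ?t = "rmv n \<pi>"
  let ?b = "\<pi> (n+1)"
  have x': "x \<in> {1..n+1}" and y': "y \<in> {1..n+1}" using x y by auto
  have aI: "ra \<in> {1..n+1}" using rm_a(1) by auto
  have nI: "n+1 \<in> {1..n+1}" by simp
  show "\<not> (y \<le> ?t x \<and> ?t x < ?t y) \<and> \<not> (?t x < ?t y \<and> ?t y < x)"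
  proof (cases "x = ra")
    case True
    have ya: "y \<noteq> ra" using xy True by auto
    have ty: "?t y = \<pi> y" using rmv_simps(2)[OF ya] y by auto
    have tx: "?t x = ?b" using True rmv_simps(1) by simp
    have c1: "\<not> (y \<le> ?b \<and> ?b < \<pi> y)"
    proof
      assume yb: "y \<le> ?b \<and> ?b < \<pi> y"
      have sub: "{ra, y} \<subseteq> {z\<in>{1..n+1}. z \<le> ?b \<and> ?b < \<pi> z}"
        using yb rm_ab rm_a aI y' rm_b by auto
      have "card {ra, y} = 2" using ya by simp
      then have "2 \<le> card {z\<in>{1..n+1}. z \<le> ?b \<and> ?b < \<pi> z}"
        using card_mono[OF _ sub] by simp
      then have c2: "2 \<le> card {z\<in>{1..n+1}. \<pi> z \<le> ?b \<and> ?b < z}" using gap_card[OF p] by simp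
      have "\<exists>z\<in>{z\<in>{1..n+1}. \<pi> z \<le> ?b \<and> ?b < z}. z \<noteq> n+1"
      proof (rule ccontr)
        assume "\<not> ?thesis"
        then have "{z\<in>{1..n+1}. \<pi> z \<le> ?b \<and> ?b < z} \<subseteq> {n+1}" by auto
        then have "card {z\<in>{1..n+1}. \<pi> z \<le> ?b \<and> ?b < z} \<le> 1"
          using card_mono[of "{n+1}"] by fastforce
        then show False using c2 by simp
      qed
      then obtain z where z: "z \<in> {1..n+1}" "\<pi> z \<le> ?b" "?b < z" "z \<noteq> n+1" by auto
      have "\<pi> z \<noteq> ?b" using z(4) perm_inj[OF p] by metis
      then have "\<pi> z < ?b" using z(2) by simp
      moreover have "z < n+1" using z(1,4) by auto
      ultimately show False using ncD(2)[OF nc z(1) nI] z(3) by blast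
    qed
    have c2: "\<not> (?b < \<pi> y \<and> \<pi> y < x)" using rm_ab True by auto
    show ?thesis using c1 c2 tx ty by simp
  next
    case xa: False
    have tx: "?t x = \<pi> x" using rmv_simps(2)[OF xa] x by auto
    show ?thesis
    proof (cases "y = ra")
      case True
      have ty: "?t y = ?b" using True rmv_simps(1) by simp
      have c1: "\<not> (y \<le> \<pi> x \<and> \<pi> x < ?b)"
      proof
        assume "y \<le> \<pi> x \<and> \<pi> x < ?b"
        moreover have "\<pi> x < \<pi> ra" using rm_range[OF x' xa] rm_a(2) by auto
        ultimately show False using ncD(1)[OF nc x' aI] xy True by blast
      qed
      have c2: "\<not> (\<pi> x < ?b \<and> ?b < x)" using rm_ab True xy by auto
      show ?thesis using c1 c2 tx ty by simp
    next
      case ya: False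
      have ty: "?t y = \<pi> y" using rmv_simps(2)[OF ya] y by auto
      show ?thesis using ncD[OF nc x' y' xy] tx ty by simp
    qed
  qed
qed

lemma rm_allw: "ra \<in> allw n (rmv n \<pi>)"
  unfolding allw_def
proof (intro CollectI conjI ballI)
  let ?t = "rmv n \<pi>"
  let ?b = "\<pi> (n+1)"
  have aI: "ra \<in> {1..n+1}" using rm_a(1) by auto
  have nI: "n+1 \<in> {1..n+1}" by simp
  show "ra \<in> {1..n}" using rm_a(1) .
  show "ra \<le> ?t ra" using rm_ab rmv_simps(1) by simp
  fix i assume i: "i \<in> {1..n}"
  show "\<not> (i < ra \<and> ra \<le> ?t i)"
  proof
    assume ia: "i < ra \<and> ra \<le> ?t i"
    then have "i \<noteq> ra" by simp
    then have ti: "?t i = \<pi> i" using rmv_simps(2) i by auto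
    have i': "i \<in> {1..n+1}" using i by auto
    have "\<pi> i < \<pi> ra" using rm_range[OF i' \<open>i \<noteq> ra\<close>] rm_a(2) by auto
    then show False using ncD(1)[OF nc i' aI] ia ti by auto
  qed
next
  let ?t = "rmv n \<pi>"
  let ?b = "\<pi> (n+1)"
  have nI: "n+1 \<in> {1..n+1}" by simp
  fix j assume j: "j \<in> {1..n}"
  show "\<not> (?t j < ?t ra \<and> ?t ra < j)"
  proof
    assume jj: "?t j < ?t ra \<and> ?t ra < j"
    then have "j \<noteq> ra" by auto
    then have tj: "?t j = \<pi> j" using rmv_simps(2) j by auto
    have j': "j \<in> {1..n+1}" "j < n+1" using j by auto
    show False using ncD(2)[OF nc j'(1) nI j'(2)] jj tj rmv_simps(1) by auto
  qed
qed

lemma rm_ins: "insp n (rmv n \<pi>) ra = \<pi>"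
proof
  fix x
  show "insp n (rmv n \<pi>) ra x = \<pi> x"
  proof (cases "x = ra")
    case True then show ?thesis using rm_a(2) by (simp add: insp_def)
  next
    case False
    then show ?thesis using rm_a(1) rmv_simps by (auto simp: insp_def)
  qed
qed

end

lemma ins_inj:
  assumes p1: "\<pi>1 permutes {1..n}" and p2: "\<pi>2 permutes {1..n}"
    and a1: "a1 \<in> {1..n}" and a2: "a2 \<in> {1..n}"
    and e: "insp n \<pi>1 a1 = insp n \<pi>2 a2"
  shows "\<pi>1 = \<pi>2 \<and> a1 = a2"
proof -
  have "insp n \<pi>2 a2 a1 = n+1" using e by (metis insp_def)
  then have "a1 = a2"
    using perm_range[OF p2 a1] a1 by (auto simp: insp_def split: if_splits)
  moreover have "\<pi>1 x = \<pi>2 x" for x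
  proof -
    consider "x = a1" | "x = n+1" | "x \<noteq> a1" "x \<noteq> n+1" by blast
    then show ?thesis
    proof cases
      case 1
      have "insp n \<pi>1 a1 (n+1) = insp n \<pi>2 a2 (n+1)" using e by simp
      then show ?thesis using 1 \<open>a1 = a2\<close> a1 by (simp add: insp_def)
    next
      case 2
      then show ?thesis using perm_out[OF p1, of x] perm_out[OF p2, of x] by simp
    next
      case 3
      have "insp n \<pi>1 a1 x = insp n \<pi>2 a2 x" using e by simp
      then show ?thesis using 3 \<open>a1 = a2\<close> by (simp add: insp_def)
    qed
  qed
  ultimately show ?thesis by auto
qed

definition SS :: "nat \<Rightarrow> nat \<Rightarrow> nat \<Rightarrow> (nat \<Rightarrow> nat) set" where
  "SS n k s = {\<pi>. \<pi> permutes {1..n} \<and> nocross n \<pi> \<and> wex n \<pi> = k \<and> card (allw n \<pi>) = s}"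

lemma rank_count:
  fixes B :: "nat set"
  assumes fB: "finite B"
  shows "card {a\<in>B. card {a'\<in>B. a' \<le> a} = s} = (if 1 \<le> s \<and> s \<le> card B then 1 else 0)"
proof -
  define f where "f a = card {a'\<in>B. a' \<le> a}" for a
  have fin: "\<And>a. finite {a'\<in>B. a' \<le> a}" using fB by simp
  have mono: "f a < f b" if "a \<in> B" "b \<in> B" "a < b" for a b
  proof -
    have "{a'\<in>B. a' \<le> a} \<subseteq> {a'\<in>B. a' \<le> b}" using that by auto
    moreover have "b \<in> {a'\<in>B. a' \<le> b}" "b \<notin> {a'\<in>B. a' \<le> a}" using that by auto
    ultimately have "{a'\<in>B. a' \<le> a} \<subset> {a'\<in>B. a' \<le> b}" by blast
    then show ?thesis unfolding f_def using fin by (intro psubset_card_mono) auto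
  qed
  have inj: "inj_on f B"
  proof (rule inj_onI)
    fix a b assume "a \<in> B" "b \<in> B" "f a = f b"
    then show "a = b" using mono[of a b] mono[of b a] by (cases a b rule: linorder_cases) auto
  qed
  have sub: "f ` B \<subseteq> {1..card B}"
  proof
    fix y assume "y \<in> f ` B"
    then obtain a where a: "a \<in> B" "y = f a" by auto
    have "a \<in> {a'\<in>B. a' \<le> a}" using a by simp
    then have "1 \<le> f a" unfolding f_def using fin[of a] by (metis One_nat_def Suc_leI card_gt_0_iff empty_iff)
    moreover have "f a \<le> card B" unfolding f_def using fB by (intro card_mono) auto
    ultimately show "y \<in> {1..card B}" using a by auto
  qed
  have img: "f ` B = {1..card B}"
    using card_image[OF inj] sub by (intro card_subset_eq) auto
  have "card {a\<in>B. f a = s} = card (f ` {a\<in>B. f a = s})"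
    using inj by (intro card_image[symmetric]) (auto intro: inj_on_subset)
  also have "f ` {a\<in>B. f a = s} = {s} \<inter> f ` B" by auto
  also have "\<dots> = {s} \<inter> {1..card B}" using img by simp
  finally show ?thesis unfolding f_def by auto
qed

lemma fixed_permutes:
  fixes n :: nat and \<sigma> :: "nat \<Rightarrow> nat"
  shows "(\<sigma> permutes {1..n+1} \<and> \<sigma> (n+1) = n+1) \<longleftrightarrow> \<sigma> permutes {1..n}"
proof
  assume a: "\<sigma> permutes {1..n+1} \<and> \<sigma> (n+1) = n+1"
  have "\<And>x. x \<in> {1..n+1} - {1..n} \<Longrightarrow> \<sigma> x = x"
  proof -
    fix x assume "x \<in> {1..n+1} - {1..n}"
    then have "x = n+1" by auto
    then show "\<sigma> x = x" using a by simp
  qed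
  then show "\<sigma> permutes {1..n}" using a permutes_superset by blast
next
  assume a: "\<sigma> permutes {1..n}"
  show "\<sigma> permutes {1..n+1} \<and> \<sigma> (n+1) = n+1"
    using a perm_out[OF a, of "n+1"] by (auto intro: permutes_subset)
qed

context
  fixes n :: nat and \<sigma> :: "nat \<Rightarrow> nat"
  assumes p: "\<sigma> permutes {1..n}"
begin

lemma fix_nocross: "nocross (n+1) \<sigma> \<longleftrightarrow> nocross n \<sigma>"
proof
  assume "nocross (n+1) \<sigma>"
  then show "nocross n \<sigma>" unfolding nocross_def by auto
next
  assume nc: "nocross n \<sigma>"
  have sn: "\<sigma> (n+1) = n+1" using perm_out[OF p] by simp
  show "nocross (n+1) \<sigma>" unfolding nocross_def
  proof (intro ballI impI)
    fix x y assume x: "x \<in> {1..n+1}" and y: "y \<in> {1..n+1}" and xy: "x < y"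
    show "\<not> (y \<le> \<sigma> x \<and> \<sigma> x < \<sigma> y) \<and> \<not> (\<sigma> x < \<sigma> y \<and> \<sigma> y < x)"
    proof (cases "y = n+1")
      case True
      then have "x \<in> {1..n}" using x xy by auto
      then have "\<sigma> x \<in> {1..n}" using perm_range[OF p] by blast
      then show ?thesis using True sn xy by auto
    next
      case False
      then have "y \<in> {1..n}" "x \<in> {1..n}" using x y xy by auto
      then show ?thesis using ncD[OF nc _ _ xy] by blast
    qed
  qed
qed

lemma fix_wex: "wex (n+1) \<sigma> = wex n \<sigma> + 1"
proof -
  have sn: "\<sigma> (n+1) = n+1" using perm_out[OF p] by simp
  have "{i \<in> {1..n+1}. \<sigma> i \<ge> i} = insert (n+1) {i \<in> {1..n}. \<sigma> i \<ge> i}" using sn by auto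
  then show ?thesis unfolding wex_def by simp
qed

lemma fix_allw: "card (allw (n+1) \<sigma>) = card (allw n \<sigma>) + 1"
proof -
  have sn: "\<sigma> (n+1) = n+1" using perm_out[OF p] by simp
  have rng: "\<And>x. x \<in> {1..n} \<Longrightarrow> \<sigma> x \<in> {1..n}" using perm_range[OF p] by blast
  have "allw (n+1) \<sigma> = insert (n+1) (allw n \<sigma>)"
  proof (intro set_eqI iffI)
    fix c assume c: "c \<in> allw (n+1) \<sigma>"
    show "c \<in> insert (n+1) (allw n \<sigma>)"
    proof (cases "c = n+1")
      case False
      then have cI: "c \<in> {1..n}" using c allw_sub by fastforce
      then show ?thesis using c unfolding allw_def by auto
    qed simp
  next
    fix c assume c: "c \<in> insert (n+1) (allw n \<sigma>)"
    show "c \<in> allw (n+1) \<sigma>"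
    proof (cases "c = n+1")
      case True
      show ?thesis unfolding allw_def
      proof (intro CollectI conjI ballI)
        show "c \<in> {1..n+1}" "c \<le> \<sigma> c" using True sn by auto
        fix i assume i: "i \<in> {1..n+1}"
        show "\<not> (i < c \<and> c \<le> \<sigma> i)"
        proof
          assume "i < c \<and> c \<le> \<sigma> i"
          then have "i \<in> {1..n}" using i True by auto
          then show False using rng \<open>i < c \<and> c \<le> \<sigma> i\<close> True by fastforce
        qed
      next
        fix j assume "j \<in> {1..n+1}"
        then show "\<not> (\<sigma> j < \<sigma> c \<and> \<sigma> c < j)" using True sn by auto
      qed
    next
      case False
      then have cA: "c \<in> allw n \<sigma>" using c by auto
      then have cI: "c \<in> {1..n}" using allw_sub by blast
      show ?thesis unfolding allw_def
      proof (intro CollectI conjI ballI)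
        show "c \<in> {1..n+1}" "c \<le> \<sigma> c" using cA cI unfolding allw_def by auto
        fix i assume i: "i \<in> {1..n+1}"
        show "\<not> (i < c \<and> c \<le> \<sigma> i)"
          using cA i cI unfolding allw_def by (cases "i = n+1") auto
      next
        fix j assume j: "j \<in> {1..n+1}"
        show "\<not> (\<sigma> j < \<sigma> c \<and> \<sigma> c < j)"
          using cA j cI sn rng[OF cI] unfolding allw_def by (cases "j = n+1") auto
      qed
    qed
  qed
  moreover have "n+1 \<notin> allw n \<sigma>" using allw_sub by fastforce
  moreover have "finite (allw n \<sigma>)" using allw_sub finite_subset by blast
  ultimately show ?thesis by simp
qed

end

lemma SS_finite: "finite (SS n k s)"
  by (rule finite_subset[of _ "{\<pi>. \<pi> permutes {1..n}}"]) (auto simp: SS_def finite_permutations)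

lemma SS_fixed_part:
  "{\<sigma> \<in> SS (n+1) k s. \<sigma> (n+1) = n+1} = (if 1 \<le> k \<and> 1 \<le> s then SS n (k-1) (s-1) else {})"
proof -
  have "\<sigma> \<in> SS (n+1) k s \<and> \<sigma> (n+1) = n+1 \<longleftrightarrow> (1 \<le> k \<and> 1 \<le> s \<and> \<sigma> \<in> SS n (k-1) (s-1))" for \<sigma>
  proof
    assume a: "\<sigma> \<in> SS (n+1) k s \<and> \<sigma> (n+1) = n+1"
    then have p: "\<sigma> permutes {1..n}" using fixed_permutes unfolding SS_def by blast
    show "1 \<le> k \<and> 1 \<le> s \<and> \<sigma> \<in> SS n (k-1) (s-1)"
      using a fix_nocross[OF p] fix_wex[OF p] fix_allw[OF p] p unfolding SS_def by auto
  next
    assume a: "1 \<le> k \<and> 1 \<le> s \<and> \<sigma> \<in> SS n (k-1) (s-1)"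
    then have p: "\<sigma> permutes {1..n}" unfolding SS_def by blast
    show "\<sigma> \<in> SS (n+1) k s \<and> \<sigma> (n+1) = n+1"
      using a fix_nocross[OF p] fix_wex[OF p] fix_allw[OF p] fixed_permutes[of \<sigma> n] p
      unfolding SS_def by auto
  qed
  then show ?thesis by auto
qed

lemma allw_le_eq:
  assumes "a \<in> allw n \<pi>"
  shows "insert a {a'\<in>allw n \<pi>. a' < a} = {a'\<in>allw n \<pi>. a' \<le> a}"
  using assms by auto

lemma SS_moving_part:
  "card {\<sigma> \<in> SS (n+1) k s. \<sigma> (n+1) \<noteq> n+1} = (if 1 \<le> s then (\<Sum>r\<in>{s..n}. card (SS n k r)) else 0)"
proof -
  define A where "A = {\<pi>. \<pi> permutes {1..n} \<and> nocross n \<pi> \<and> wex n \<pi> = k}"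
  define B where "B \<pi> = {a\<in>allw n \<pi>. card {a'\<in>allw n \<pi>. a' \<le> a} = s}" for \<pi>
  define P where "P = Sigma A B"
  have finA: "finite A"
    by (rule finite_subset[of _ "{\<pi>. \<pi> permutes {1..n}}"]) (auto simp: A_def finite_permutations)
  have finB: "\<And>\<pi>. finite (B \<pi>)"
  proof -
    fix \<pi>
    have "B \<pi> \<subseteq> {1..n}" unfolding B_def using allw_sub by blast
    then show "finite (B \<pi>)" using finite_subset by blast
  qed
  have finAl: "\<And>\<pi>. finite (allw n \<pi>)" using allw_sub finite_subset by blast
  have img: "{\<sigma> \<in> SS (n+1) k s. \<sigma> (n+1) \<noteq> n+1} = (\<lambda>(\<pi>,a). insp n \<pi> a) ` P"
  proof (intro set_eqI iffI)
    fix \<sigma> assume s: "\<sigma> \<in> {\<sigma> \<in> SS (n+1) k s. \<sigma> (n+1) \<noteq> n+1}"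
    then have p: "\<sigma> permutes {1..n+1}" and nc: "nocross (n+1) \<sigma>" and w: "wex (n+1) \<sigma> = k"
      and c: "card (allw (n+1) \<sigma>) = s" and h: "\<sigma> (n+1) \<noteq> n+1"
      unfolding SS_def by auto
    define \<pi> where "\<pi> = rmv n \<sigma>"
    define a where "a = ra n \<sigma>"
    have pp: "\<pi> permutes {1..n}" unfolding \<pi>_def by (rule rm_permutes[OF p nc h])
    have pnc: "nocross n \<pi>" unfolding \<pi>_def by (rule rm_nocross[OF p nc h])
    have pa: "a \<in> allw n \<pi>" unfolding \<pi>_def a_def by (rule rm_allw[OF p nc h])
    have ins: "insp n \<pi> a = \<sigma>" unfolding \<pi>_def a_def by (rule rm_ins[OF p nc h])
    have "wex n \<pi> = k" using ins_wex[OF pp pnc pa] ins w by simp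
    moreover have "card {a'\<in>allw n \<pi>. a' \<le> a} = s"
      using ins_allw[OF pp pnc pa] ins c allw_le_eq[OF pa] by simp
    ultimately have "(\<pi>, a) \<in> P" unfolding P_def A_def B_def using pp pnc pa by auto
    then show "\<sigma> \<in> (\<lambda>(\<pi>,a). insp n \<pi> a) ` P"
      by (rule image_eqI[rotated]) (simp add: ins)
  next
    fix \<sigma> assume "\<sigma> \<in> (\<lambda>(\<pi>,a). insp n \<pi> a) ` P"
    then obtain \<pi> a where pa: "(\<pi>, a) \<in> P" and se: "\<sigma> = insp n \<pi> a" by auto
    then have pp: "\<pi> permutes {1..n}" and pnc: "nocross n \<pi>" and w: "wex n \<pi> = k"
      and aa: "a \<in> allw n \<pi>" and r: "card {a'\<in>allw n \<pi>. a' \<le> a} = s"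
      unfolding P_def A_def B_def by auto
    have aI: "a \<in> {1..n}" using aa allw_sub by blast
    have "\<pi> a \<in> {1..n}" using perm_range[OF pp aI] .
    then have "\<sigma> (n+1) \<noteq> n+1" using se aI by (auto simp: insp_def)
    moreover have "\<sigma> \<in> SS (n+1) k s"
      unfolding SS_def se mem_Collect_eq
    proof (intro conjI)
      show "insp n \<pi> a permutes {1..n+1}" by (rule ins_permutes[OF pp pnc aa])
      show "nocross (n+1) (insp n \<pi> a)" by (rule ins_nocross[OF pp pnc aa])
      show "wex (n+1) (insp n \<pi> a) = k" using ins_wex[OF pp pnc aa] w by simp
      have "card (allw (n+1) (insp n \<pi> a)) = card {a'\<in>allw n \<pi>. a' \<le> a}"
        unfolding ins_allw[OF pp pnc aa] allw_le_eq[OF aa] ..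
      then show "card (allw (n+1) (insp n \<pi> a)) = s" using r by simp
    qed
    ultimately show "\<sigma> \<in> {\<sigma> \<in> SS (n+1) k s. \<sigma> (n+1) \<noteq> n+1}" by simp
  qed
  have inj: "inj_on (\<lambda>(\<pi>,a). insp n \<pi> a) P"
  proof (rule inj_onI)
    fix x y assume x: "x \<in> P" and y: "y \<in> P" and e: "(\<lambda>(\<pi>,a). insp n \<pi> a) x = (\<lambda>(\<pi>,a). insp n \<pi> a) y"
    obtain \<pi>1 a1 where x1: "x = (\<pi>1, a1)" by (cases x)
    obtain \<pi>2 a2 where y1: "y = (\<pi>2, a2)" by (cases y)
    have "\<pi>1 permutes {1..n}" "a1 \<in> allw n \<pi>1" using x x1 unfolding P_def A_def B_def by auto
    moreover have "\<pi>2 permutes {1..n}" "a2 \<in> allw n \<pi>2" using y y1 unfolding P_def A_def B_def by auto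
    ultimately have "\<pi>1 permutes {1..n}" "a1 \<in> {1..n}" "\<pi>2 permutes {1..n}" "a2 \<in> {1..n}"
      using allw_sub by blast+
    then show "x = y" using ins_inj[of \<pi>1 n \<pi>2 a1 a2] e x1 y1 by auto
  qed
  have "card {\<sigma> \<in> SS (n+1) k s. \<sigma> (n+1) \<noteq> n+1} = card P"
    unfolding img using inj by (rule card_image)
  also have "\<dots> = (\<Sum>\<pi>\<in>A. card (B \<pi>))"
    unfolding P_def using finA finB by (intro card_SigmaI) auto
  also have "\<dots> = (\<Sum>\<pi>\<in>A. if 1 \<le> s \<and> s \<le> card (allw n \<pi>) then 1 else 0)"
    unfolding B_def using rank_count[OF finAl] by simp
  also have "\<dots> = card {\<pi>\<in>A. 1 \<le> s \<and> s \<le> card (allw n \<pi>)}"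
    using finA by (rule card_filter_sum[symmetric])
  also have "\<dots> = (if 1 \<le> s then (\<Sum>r\<in>{s..n}. card (SS n k r)) else 0)"
  proof (cases "1 \<le> s")
    case False then show ?thesis by simp
  next
    case True
    have "{\<pi>\<in>A. 1 \<le> s \<and> s \<le> card (allw n \<pi>)} = (\<Union>r\<in>{s..n}. SS n k r)"
      unfolding A_def SS_def using True card_allw_le by fastforce
    moreover have "card (\<Union>r\<in>{s..n}. SS n k r) = (\<Sum>r\<in>{s..n}. card (SS n k r))"
      by (rule card_UN_disjoint) (simp, simp add: SS_finite, auto simp: SS_def)
    ultimately show ?thesis using True by simp
  qed
  finally show ?thesis .
qed

lemma SS_rec:
  "card (SS (n+1) k s) = (if 1 \<le> k \<and> 1 \<le> s then card (SS n (k-1) (s-1)) else 0)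
      + (if 1 \<le> s then (\<Sum>r\<in>{s..n}. card (SS n k r)) else 0)"
proof -
  have "SS (n+1) k s = {\<sigma> \<in> SS (n+1) k s. \<sigma> (n+1) = n+1} \<union> {\<sigma> \<in> SS (n+1) k s. \<sigma> (n+1) \<noteq> n+1}"
    by auto
  then have "card (SS (n+1) k s) = card {\<sigma> \<in> SS (n+1) k s. \<sigma> (n+1) = n+1} + card {\<sigma> \<in> SS (n+1) k s. \<sigma> (n+1) \<noteq> n+1}"
    using SS_finite[of "n+1" k s] by (subst card_Un_disjoint[symmetric]) auto
  then show ?thesis unfolding SS_fixed_part SS_moving_part by simp
qed

lemma SS_zero: "card (SS 0 k s) = (if k = 0 \<and> s = 0 then 1 else 0)"
proof -
  have "SS 0 k s = (if k = 0 \<and> s = 0 then {id} else {})"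
    unfolding SS_def wex_def allw_def nocross_def by auto
  then show ?thesis by simp
qed

definition Gc :: "nat \<Rightarrow> nat \<Rightarrow> nat \<Rightarrow> real" where
  "Gc n k s = (if k < n then (if s \<le> k then real s * real (n choose k) * real ((n - s - 1) choose (n - k - 1)) / real n else 0)
     else if k = n then (if s = n then 1 else 0) else 0)"

definition Tc :: "nat \<Rightarrow> nat \<Rightarrow> nat \<Rightarrow> real" where
  "Tc n k s = (if k < n then (if s \<le> k then real (n choose k) * (real s * real ((n - s) choose (n - k))
        + real ((n - s) choose (n - k + 1))) / real n else 0)
     else if k = n then (if s \<le> n then 1 else 0) else 0)"

lemma I1_generic:
  assumes sk: "s < k" and kn: "k < n"
  shows "Tc n k s = Gc n k s + Tc n k (Suc s)"
proof -
  define m where "m = n - k"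
  define a where "a = n - s - 1"
  have m1: "m \<ge> 1" using kn by (simp add: m_def)
  have am: "n - s = Suc a" using sk kn by (simp add: a_def)
  have am2: "n - Suc s = a" by (simp add: a_def)
  have p1: "(Suc a choose m) = (a choose (m - 1)) + (a choose m)"
    using m1 by (metis Suc_diff_1 binomial_Suc_Suc less_le_trans zero_less_one)
  have p2: "(Suc a choose (m + 1)) = (a choose m) + (a choose (m+1))"
    by simp
  have e1: "n - k = m" "n - k - 1 = m - 1" "n - k + 1 = m + 1" by (simp_all add: m_def)
  show ?thesis
    unfolding Tc_def Gc_def using sk kn
    apply (simp only: if_True if_False e1 am am2 less_imp_le Suc_leI refl)
    apply (simp add: p1 p2 field_simps)
    done
qed

lemma I1:
  assumes sn: "s \<le> n"
  shows "Tc n k s = Gc n k s + Tc n k (Suc s)"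
proof -
  consider "k < n \<and> s < k" | "k < n \<and> s = k" | "k < n \<and> k < s" | "k = n" | "n < k" by linarith
  then show ?thesis
  proof cases
    case 1 then show ?thesis using I1_generic by blast
  next
    case 2
    then have "n - k - 1 = n - Suc k" by simp
    then show ?thesis using 2 by (simp add: Tc_def Gc_def)
  next
    case 3 then show ?thesis by (simp add: Tc_def Gc_def)
  next
    case 4 then show ?thesis using sn by (simp add: Tc_def Gc_def)
  next
    case 5 then show ?thesis by (simp add: Tc_def Gc_def)
  qed
qed

lemma Tsum_aux:
  "d \<le> n + 1 \<Longrightarrow> (\<Sum>r\<in>{n+1-d..n}. Gc n k r) = Tc n k (n+1-d)"
proof (induction d)
  case 0 then show ?case by (simp add: Tc_def)
next
  case (Suc d)
  define j where "j = n + 1 - Suc d"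
  have jn: "j \<le> n" using Suc.prems by (simp add: j_def)
  have j1: "Suc j = n + 1 - d" using Suc.prems by (simp add: j_def)
  have "(\<Sum>r\<in>{j..n}. Gc n k r) = Gc n k j + (\<Sum>r\<in>{Suc j..n}. Gc n k r)"
    using jn by (rule sum.atLeast_Suc_atMost)
  also have "\<dots> = Gc n k j + Tc n k (Suc j)" using Suc j1 by simp
  also have "\<dots> = Tc n k j" using I1[OF jn] by simp
  finally show ?case unfolding j_def .
qed

lemma Tsum:
  "(\<Sum>r\<in>{s..n}. Gc n k r) = Tc n k s"
proof (cases "s \<le> n + 1")
  case True
  then have "s = n + 1 - (n + 1 - s)" by simp
  then show ?thesis using Tsum_aux[of "n + 1 - s" n k] by simp
next
  case False then show ?thesis by (simp add: Tc_def)
qed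

lemma I2_generic:
  assumes s1: "1 \<le> s" and sk: "s \<le> k" and kn: "k < n"
  shows "Gc (Suc n) k s = Gc n (k-1) (s-1) + Tc n k s"
proof -
  define m where "m = n - k"
  define a where "a = n - s"
  define X where "X = real (n choose (k-1))"
  define Y where "Y = real (a choose m)"
  define Z where "Z = real (n choose k)"
  define W where "W = real (a choose (m+1))"
  have k1: "k \<ge> 1" using s1 sk by simp
  have F1: "real (Suc n choose k) = Z + X"
  proof -
    have "Suc n choose k = (n choose (k-1)) + (n choose k)"
      using k1 by (metis Suc_diff_1 binomial_Suc_Suc less_le_trans zero_less_one)
    then show ?thesis unfolding X_def Z_def by simp
  qed
  have F2: "real k * Z = real (m+1) * X"
  proof -
    have "k * (n choose k) = n * (n - 1 choose (k - 1))" using k1 by (intro times_binomial_minus1_eq) simp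
    moreover have "(n - (k-1)) * (n choose (k-1)) = n * (n - 1 choose (k-1))" by (rule binomial_absorb_comp)
    moreover have "n - (k-1) = m + 1" using kn k1 by (simp add: m_def)
    ultimately have "k * (n choose k) = (m+1) * (n choose (k-1))" by simp
    then show ?thesis unfolding X_def Z_def by (metis of_nat_mult)
  qed
  have F3: "real (m+1) * W = real (k - s) * Y"
  proof -
    have "Suc m * (a choose Suc m) = a * (a - 1 choose m)" by (rule binomial_absorption)
    moreover have "(a - m) * (a choose m) = a * (a - 1 choose m)" by (rule binomial_absorb_comp)
    moreover have "a - m = k - s" using sk kn by (simp add: a_def m_def)
    ultimately have "(m+1) * (a choose (m+1)) = (k - s) * (a choose m)" by simp
    then show ?thesis unfolding W_def Y_def by (metis of_nat_mult)
  qed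
  have kpos: "real k > 0" using k1 by simp
  have mpos: "real (m+1) > 0" by simp
  have Zeq: "Z = real (m+1) * X / real k" using F2 kpos by (simp add: field_simps)
  have Weq: "W = real (k - s) * Y / real (m+1)" using F3 mpos by (simp add: field_simps)
  have nkm: "real n = real k + real m" using kn by (simp add: m_def)
  have ks: "real (k - s) = real k - real s" using sk by simp
  have s1r: "real (s - 1) = real s - 1" using s1 by simp
  have npos: "real n > 0" using kn by simp
  have lhs: "Gc (Suc n) k s = real s * (Z + X) * Y / real (Suc n)"
  proof -
    have "Suc n - s - 1 = a" "Suc n - k - 1 = m" by (simp_all add: a_def m_def)
    then show ?thesis unfolding Gc_def Y_def using sk kn F1 by simp
  qed
  have r1: "Gc n (k-1) (s-1) = real (s-1) * X * Y / real n"
  proof -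
    have "n - (s - 1) - 1 = a" "n - (k - 1) - 1 = m" using s1 k1 sk kn by (simp_all add: a_def m_def)
    moreover have "k - 1 < n" "s - 1 \<le> k - 1" using sk kn by auto
    ultimately show ?thesis unfolding Gc_def X_def Y_def by simp
  qed
  have r2: "Tc n k s = Z * (real s * Y + W) / real n"
    unfolding Tc_def Z_def Y_def W_def a_def m_def using sk kn by simp
  have s1r': "real (s - Suc 0) = real s - 1" using s1 by simp
  have kne: "real k \<noteq> 0" using kpos by simp
  have mne: "real m + 1 \<noteq> 0" by (simp add: add_nonneg_pos)
  have mr: "real (m+1) = real m + 1" by simp
  have F2': "real k * Z = (real m + 1) * X" using F2 by simp
  have F3': "(real m + 1) * W = (real k - real s) * Y" using F3 ks by (simp add: add.commute)
  have key0: "real k * (real m + 1) * (real s * (Z + X) * Y * (real k + real m)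
      - ((real s - 1) * X * Y + Z * (real s * Y + W)) * (real k + real m + 1)) = 0"
    using F2' F3' by algebra
  have key: "real s * (Z + X) * Y * real n = (real (s-1) * X * Y + Z * (real s * Y + W)) * (real n + 1)"
    using key0 kne mne unfolding s1r nkm by simp
  show ?thesis unfolding lhs r1 r2
    using key npos by (simp add: field_simps)
qed

lemma I2:
  "Gc (Suc n) k s = (if 1 \<le> k \<and> 1 \<le> s then Gc n (k-1) (s-1) else 0) + (if 1 \<le> s then Tc n k s else 0)"
proof -
  consider "s = 0" | "1 \<le> s" "k = 0" | "1 \<le> s" "1 \<le> k" "Suc n < k" | "1 \<le> s" "k = Suc n"
    | "1 \<le> s" "1 \<le> k" "k = n" | "1 \<le> s" "1 \<le> k" "k < n" "s \<le> k" | "1 \<le> s" "1 \<le> k" "k < n" "k < s"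
    by linarith
  then show ?thesis
  proof cases
    case 1 then show ?thesis by (simp add: Gc_def)
  next
    case 2 then show ?thesis by (simp add: Gc_def Tc_def)
  next
    case 3 then show ?thesis by (simp add: Gc_def Tc_def)
  next
    case 4 then show ?thesis by (auto simp add: Gc_def Tc_def)
  next
    case 5
    show ?thesis
    proof (cases "s \<le> n")
      case True
      have n1: "n \<ge> 1" using 5 by simp
      have a: "Gc (Suc n) k s = real s" using 5 True by (simp add: Gc_def)
      have b: "Gc n (k-1) (s-1) = real s - 1"
      proof -
        have "n - (s - 1) - 1 = n - s" "n - (n - 1) - 1 = 0" using 5 True by auto
        moreover have "n - 1 < n" "s - 1 \<le> n - 1" using n1 True by auto
        moreover have "n choose (n - Suc 0) = n" using binomial_symmetric[of 1 n] n1 by simp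
        ultimately show ?thesis using 5 n1 by (simp add: Gc_def of_nat_diff)
      qed
      have c: "Tc n k s = 1" using 5 True by (simp add: Tc_def)
      show ?thesis using a b c 5 by simp
    next
      case False
      then show ?thesis using 5 by (simp add: Gc_def Tc_def)
    qed
  next
    case 6
    then have "Gc (Suc n) k s = Gc n (k-1) (s-1) + Tc n k s" using I2_generic by blast
    then show ?thesis using 6 by simp
  next
    case 7 then show ?thesis by (simp add: Gc_def Tc_def)
  qed
qed

theorem SS_closed: "real (card (SS n k s)) = Gc n k s"
proof (induction n arbitrary: k s)
  case 0
  then show ?case by (simp add: SS_zero Gc_def)
next
  case (Suc n)
  have "real (card (SS (n+1) k s)) = (if 1 \<le> k \<and> 1 \<le> s then real (card (SS n (k-1) (s-1))) else 0)
      + (if 1 \<le> s then (\<Sum>r\<in>{s..n}. real (card (SS n k r))) else 0)"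
    unfolding SS_rec by simp
  also have "\<dots> = (if 1 \<le> k \<and> 1 \<le> s then Gc n (k-1) (s-1) else 0) + (if 1 \<le> s then Tc n k s else 0)"
    using Suc.IH Tsum by simp
  also have "\<dots> = Gc (Suc n) k s" using I2 by simp
  finally show ?case by simp
qed

lemma count_narayana:
  assumes k1: "1 \<le> k" and kn: "k \<le> n"
  shows "real (card {\<pi>. \<pi> permutes {1..n} \<and> wex n \<pi> = k \<and> crs n \<pi> = 0}) = narayana k n"
proof -
  have eq: "{\<pi>. \<pi> permutes {1..n} \<and> wex n \<pi> = k \<and> crs n \<pi> = 0} = (\<Union>s\<in>{0..n}. SS n k s)"
    unfolding SS_def crs_zero_iff using card_allw_le by fastforce
  have "card (\<Union>s\<in>{0..n}. SS n k s) = (\<Sum>s\<in>{0..n}. card (SS n k s))"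
    by (rule card_UN_disjoint) (simp, simp add: SS_finite, auto simp: SS_def)
  then have "real (card {\<pi>. \<pi> permutes {1..n} \<and> wex n \<pi> = k \<and> crs n \<pi> = 0}) = (\<Sum>s\<in>{0..n}. Gc n k s)"
    unfolding eq by (simp add: SS_closed)
  also have "\<dots> = Tc n k 0" by (rule Tsum)
  also have "\<dots> = narayana k n"
  proof (cases "k < n")
    case True
    have e: "n - (k - 1) = n - k + 1" using k1 kn by simp
    have "n choose (k - 1) = n choose (n - (k - 1))" using kn by (intro binomial_symmetric) simp
    then have "n choose (n - k + 1) = n choose (k - 1)" unfolding e by simp
    then show ?thesis using True unfolding Tc_def narayana_def by simp
  next
    case False
    then have kn': "k = n" using kn by simp
    have "n choose (n - 1) = n" using binomial_symmetric[of 1 n] k1 kn' by simp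
    then show ?thesis using kn' k1 unfolding Tc_def narayana_def by simp
  qed
  finally show ?thesis .
qed

lemma fps_to_fls_sum: "fps_to_fls (sum f A) = (\<Sum>x\<in>A. fps_to_fls (f x))"
  by (induction A rule: infinite_finite_induct) auto

theorem mainTheorem13:
  fixes k n :: nat
  assumes "1 \<le> k" and "k \<le> n"
  shows "\<exists>p :: int poly. Ehat_kn k n = fps_to_fls (fps_of_poly p) \<and>
           degree p = (k - 1) * (n - k) \<and> real_of_int (poly p 0) = narayana k n"
proof -
  define S where "S = {\<pi>. \<pi> permutes {1..n} \<and> wex n \<pi> = k}"
  define D where "D = (k - 1) * (n - k)"
  define p :: "int poly" where "p = (\<Sum>\<pi>\<in>S. monom 1 (crs n \<pi>))"
  have finS: "finite S"
    by (rule finite_subset[of _ "{\<pi>. \<pi> permutes {1..n}}"]) (auto simp: S_def finite_permutations)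
  have idS: "al n \<pi> + crs n \<pi> + (n - k) = k * (n - k)" if "\<pi> \<in> S" for \<pi>
    using al_crs_identity[of \<pi> n] that unfolding S_def by auto
  have kD: "k * (n - k) = D + (n - k)"
  proof -
    obtain j where "k = Suc j" using assms(1) by (cases k) auto
    then show ?thesis unfolding D_def by simp
  qed
  have crsD: "crs n \<pi> \<le> D" if "\<pi> \<in> S" for \<pi>
    using idS[OF that] kD by linarith
  have expo: "int k - int n + (int (k * (n - k)) - int (al n \<pi>)) = int (crs n \<pi>)" if "\<pi> \<in> S" for \<pi>
  proof -
    have "int (al n \<pi>) + int (crs n \<pi>) + (int n - int k) = int (k * (n - k))"
      using idS[OF that] assms(2) by (metis of_nat_add of_nat_diff)
    then show ?thesis by linarith
  qed
  have E: "Ehat_kn k n = (\<Sum>\<pi>\<in>S. fls_X_intpow (int (crs n \<pi>)))"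
  proof -
    have "Ehat_kn k n = (\<Sum>\<pi>\<in>S. fls_X_intpow (int k - int n) * fls_X_intpow (int (k * (n - k)) - int (al n \<pi>)))"
      unfolding Ehat_kn_def E_kn_def S_def by (simp add: sum_distrib_left)
    also have "\<dots> = (\<Sum>\<pi>\<in>S. fls_X_intpow (int (crs n \<pi>)))"
      by (rule sum.cong[OF refl]) (simp only: fls_X_intpow_times_fls_X_intpow expo)
    finally show ?thesis .
  qed
  have P: "fps_to_fls (fps_of_poly p) = (\<Sum>\<pi>\<in>S. fls_X_intpow (int (crs n \<pi>)))"
    unfolding p_def fps_of_poly_sum fps_to_fls_sum
    by (rule sum.cong[OF refl]) (simp add: fps_of_poly_monom' fps_to_fls_power fls_X_power_conv_shift_1)
  have coeffp: "coeff p d = int (card {\<pi>\<in>S. crs n \<pi> = d})" for d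
  proof -
    have "coeff p d = (\<Sum>\<pi>\<in>S. if crs n \<pi> = d then 1 else 0)"
      unfolding p_def by (simp add: coeff_sum coeff_monom)
    also have "\<dots> = int (\<Sum>\<pi>\<in>S. if crs n \<pi> = d then 1 else 0)"
      unfolding of_nat_sum by (rule sum.cong[OF refl]) simp
    also have "\<dots> = int (card {\<pi>\<in>S. crs n \<pi> = d})"
      using card_filter_sum[OF finS, of "\<lambda>\<pi>. crs n \<pi> = d"] by simp
    finally show ?thesis .
  qed
  have deg: "degree p = D"
  proof (rule antisym)
    show "degree p \<le> D"
    proof (rule degree_le, intro allI impI)
      fix i assume "D < i"
      then have "{\<pi>\<in>S. crs n \<pi> = i} = {}" using crsD by fastforce
      then show "coeff p i = 0" unfolding coeffp by (simp only: card.empty of_nat_0)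
    qed
  next
    have c: "n - k < n" using assms by simp
    define \<sigma> where "\<sigma> = shiftp n (n - k)"
    have sS: "\<sigma> \<in> S" unfolding S_def \<sigma>_def
      using shiftp_permutes[OF c] shiftp_wex[OF c] assms by simp
    have "al n \<sigma> = 0" unfolding \<sigma>_def using shiftp_al[OF c] .
    then have "crs n \<sigma> = D" using idS[OF sS] kD by linarith
    then have "\<sigma> \<in> {\<pi>\<in>S. crs n \<pi> = D}" using sS by simp
    then have "card {\<pi>\<in>S. crs n \<pi> = D} \<noteq> 0" using finS by (auto simp: card_eq_0_iff)
    then have "coeff p D \<noteq> 0" unfolding coeffp by simp
    then show "D \<le> degree p" by (rule le_degree)
  qed
  have p0: "real_of_int (poly p 0) = narayana k n"
  proof -
    have "poly p 0 = int (card {\<pi>\<in>S. crs n \<pi> = 0})" by (simp add: poly_0_coeff_0 coeffp)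
    moreover have "{\<pi>\<in>S. crs n \<pi> = 0} = {\<pi>. \<pi> permutes {1..n} \<and> wex n \<pi> = k \<and> crs n \<pi> = 0}"
      unfolding S_def by auto
    ultimately show ?thesis using count_narayana[OF assms] by simp
  qed
  show ?thesis
  proof (intro exI conjI)
    show "Ehat_kn k n = fps_to_fls (fps_of_poly p)" using E P by simp
    show "degree p = (k - 1) * (n - k)" using deg unfolding D_def .
    show "real_of_int (poly p 0) = narayana k n" by (rule p0)
  qed
qed

end
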